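(* For all $\mathcal S,\mathcal S'\in\mathrm{TP}(n)$, $K_{\mathcal S}\cap K_{\mathcal S'}=K_{\mathcal S\cap\mathcal S'}$.
   Context: A rooted tree on leaf set $[n]$ has leaves labeled bijectively by $[n]$ and internal vertices each with at least two children; a clade is the set of leaves below an internal vertex, and $\mathrm{clade}(T)$ is the set of clades (including $[n]$). $\mathrm{TP}(n)$ is the collection of sets of the form $\mathrm{clade}(T_1)\cup\mathrm{clade}(T_2)$ for rooted trees $T_1,T_2$ on leaf set $[n]$. For a family $\mathcal S\subseteq 2^{[n]}$, $\mathcal S^\circ=\mathcal S\setminus\{[n]\}$, and $K_{\mathcal S}=\mathbb{R}(1,\dots,1)^T+\mathrm{cone}\{-v_C: C\in\mathcal S^\circ\}\subseteq\mathbb{R}^{\binom{[n]}{2}}$, where $v_C$ is the characteristic vector of the set $\binom{C}{2}$ of pairs contained in $C$. *)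

theory Defs
  imports Complex_Main
begin

datatype rtree = Leaf nat | Node "rtree list"

fun leaf_list :: "rtree \<Rightarrow> nat list" where
  "leaf_list (Leaf i) = [i]"
| "leaf_list (Node ts) = concat (map leaf_list ts)"

fun wf_rtree :: "rtree \<Rightarrow> bool" where
  "wf_rtree (Leaf i) = True"
| "wf_rtree (Node ts) = (length ts \<ge> 2 \<and> (\<forall>t\<in>set ts. wf_rtree t))"

definition tree_on :: "nat \<Rightarrow> rtree \<Rightarrow> bool" where
  "tree_on n T \<longleftrightarrow> wf_rtree T \<and> distinct (leaf_list T) \<and> set (leaf_list T) = {1..n}"

fun clades :: "rtree \<Rightarrow> nat set set" where
  "clades (Leaf i) = {}"
| "clades (Node ts) = insert (set (leaf_list (Node ts))) (\<Union>t\<in>set ts. clades t)"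

definition TP :: "nat \<Rightarrow> nat set set set" where
  "TP n = {clades T1 \<union> clades T2 | T1 T2. tree_on n T1 \<and> tree_on n T2}"

text \<open>Coordinates: the 2-element subsets of [n]. Vectors in R^(binom [n] 2) are
  functions on these pairs, extended by 0 elsewhere.\<close>
definition pairs :: "nat \<Rightarrow> nat set set" where
  "pairs n = {p. p \<subseteq> {1..n} \<and> card p = 2}"

definition Kcone :: "nat \<Rightarrow> nat set set \<Rightarrow> (nat set \<Rightarrow> real) set" where
  "Kcone n S = {x. \<exists>(c::real) (l::nat set \<Rightarrow> real).
      (\<forall>C \<in> S - {{1..n}}. l C \<ge> 0) \<and>
      x = (\<lambda>p. if p \<in> pairs n
               then c - (\<Sum>C \<in> S - {{1..n}}. l C * (if p \<subseteq> C then 1 else 0))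
               else 0)}"

end

theory Submission
  imports Defs
begin

definition lam :: "nat set set \<Rightarrow> bool" where
  "lam F \<longleftrightarrow> (\<forall>C\<in>F. \<forall>D\<in>F. C \<subseteq> D \<or> D \<subseteq> C \<or> C \<inter> D = {})"

lemma leaf_nonempty: "wf_rtree t \<Longrightarrow> leaf_list t \<noteq> []"
proof (induction t)
  case (Leaf x)
  then show ?case by simp
next
  case (Node ts)
  then obtain t where "t \<in> set ts" by (cases ts) auto
  with Node show ?case by auto
qed

lemma clade_sub: "C \<in> clades t \<Longrightarrow> C \<subseteq> set (leaf_list t)"
proof (induction t arbitrary: C)
  case (Leaf x)
  then show ?case by simp
next
  case (Node ts)
  then show ?case by fastforce
qed

lemma finite_clades: "finite (clades t)"
  by (induction t) auto

lemma len_concat: "\<forall>t\<in>set ts. leaf_list t \<noteq> [] \<Longrightarrow> length ts \<le> length (concat (map leaf_list ts))"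
proof (induction ts)
  case Nil
  then show ?case by simp
next
  case (Cons a ts)
  then show ?case by (cases "leaf_list a") auto
qed

lemma clade_card: "wf_rtree t \<Longrightarrow> distinct (leaf_list t) \<Longrightarrow> C \<in> clades t \<Longrightarrow> 2 \<le> card C"
proof (induction t arbitrary: C)
  case (Leaf x)
  then show ?case by simp
next
  case (Node ts)
  show ?case
  proof (cases "C = set (leaf_list (Node ts))")
    case True
    have "\<forall>t\<in>set ts. leaf_list t \<noteq> []" using Node.prems leaf_nonempty by auto
    then have "length ts \<le> length (leaf_list (Node ts))" using len_concat by simp
    moreover have "length ts \<ge> 2" using Node.prems by simp
    ultimately show ?thesis using True Node.prems(2) distinct_card by fastforce
  next
    case False
    then obtain t where t: "t \<in> set ts" "C \<in> clades t" using Node.prems by auto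
    have "distinct (leaf_list t)" using Node.prems(2) t(1) by (auto simp: distinct_concat_iff)
    then show ?thesis using Node.IH[OF t(1)] Node.prems t by auto
  qed
qed

lemma lam_union_disj:
  assumes "lam F1" "lam F2" "\<forall>C\<in>F1. C \<subseteq> X" "\<forall>C\<in>F2. C \<subseteq> Y" "X \<inter> Y = {}"
  shows "lam (F1 \<union> F2)"
  unfolding lam_def
proof (intro ballI)
  fix C D assume C: "C \<in> F1 \<union> F2" and D: "D \<in> F1 \<union> F2"
  show "C \<subseteq> D \<or> D \<subseteq> C \<or> C \<inter> D = {}"
  proof (cases "C \<in> F1")
    case True
    show ?thesis
    proof (cases "D \<in> F1")
      case True
      then show ?thesis using \<open>C \<in> F1\<close> assms(1) unfolding lam_def by blast
    next
      case False
      then have "D \<subseteq> Y" using D assms(4) by blast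
      moreover have "C \<subseteq> X" using \<open>C \<in> F1\<close> assms(3) by blast
      ultimately show ?thesis using assms(5) by blast
    qed
  next
    case False
    then have CY: "C \<in> F2" "C \<subseteq> Y" using C assms(4) by blast+
    show ?thesis
    proof (cases "D \<in> F1")
      case True
      then have "D \<subseteq> X" using assms(3) by blast
      then show ?thesis using CY assms(5) by blast
    next
      case False
      then have "D \<in> F2" using D by blast
      then show ?thesis using CY assms(2) unfolding lam_def by blast
    qed
  qed
qed

lemma lam_UN:
  "(\<forall>t\<in>set ts. lam (clades t)) \<Longrightarrow> distinct (concat (map leaf_list ts)) \<Longrightarrow> lam (\<Union>t\<in>set ts. clades t)"
proof (induction ts)
  case Nil
  then show ?case by (simp add: lam_def)
next
  case (Cons a ts)
  have d: "set (leaf_list a) \<inter> set (concat (map leaf_list ts)) = {}" using Cons.prems(2) by simp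
  have "lam (clades a \<union> (\<Union>t\<in>set ts. clades t))"
  proof (rule lam_union_disj[OF _ _ _ _ d])
    show "lam (clades a)" using Cons.prems by simp
    show "lam (\<Union>t\<in>set ts. clades t)" using Cons.IH Cons.prems by simp
    show "\<forall>C\<in>clades a. C \<subseteq> set (leaf_list a)" using clade_sub by blast
    show "\<forall>C\<in>(\<Union>t\<in>set ts. clades t). C \<subseteq> set (concat (map leaf_list ts))"
      using clade_sub by fastforce
  qed
  then show ?case by simp
qed

lemma lam_clades: "wf_rtree t \<Longrightarrow> distinct (leaf_list t) \<Longrightarrow> lam (clades t)"
proof (induction t)
  case (Leaf x)
  then show ?case by (simp add: lam_def)
next
  case (Node ts)
  have "\<forall>t\<in>set ts. lam (clades t)"
    using Node by (auto simp: distinct_concat_iff)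
  then have l: "lam (\<Union>t\<in>set ts. clades t)" using lam_UN Node.prems(2) by simp
  have "\<forall>C\<in>(\<Union>t\<in>set ts. clades t). C \<subseteq> set (leaf_list (Node ts))"
    using clade_sub by fastforce
  with l show ?case unfolding lam_def by simp
qed


lemma lam_subset: "lam F \<Longrightarrow> G \<subseteq> F \<Longrightarrow> lam G"
  unfolding lam_def by blast

lemma one_family:
  assumes "lam H" "finite C" "i \<in> C" "j0 \<in> C" "j0 \<noteq> i"
    and cov: "\<forall>j\<in>C. j \<noteq> i \<longrightarrow> (\<exists>D\<in>H. i \<in> D \<and> j \<in> D)"
  shows "\<exists>D\<in>H. C \<subseteq> D"
proof -
  have "\<forall>j\<in>C-{i}. \<exists>D. D \<in> H \<and> i \<in> D \<and> j \<in> D" using cov by blast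
  then obtain f where f: "\<forall>j\<in>C-{i}. f j \<in> H \<and> i \<in> f j \<and> j \<in> f j"
    by (metis (no_types))
  let ?M = "f ` (C - {i})"
  have "finite ?M" using assms(2) by simp
  moreover have "?M \<noteq> {}" using assms(4,5) by blast
  ultimately obtain m where m: "m \<in> ?M" "\<forall>b\<in>?M. m \<subseteq> b \<longrightarrow> m = b"
    using finite_has_maximal[of ?M] by blast
  have mH: "m \<in> H" "i \<in> m" using m(1) f by auto
  have big: "b \<subseteq> m" if "b \<in> ?M" for b
  proof -
    have "b \<in> H" "i \<in> b" using that f by auto
    then have "b \<subseteq> m \<or> m \<subseteq> b \<or> b \<inter> m = {}" using mH assms(1) unfolding lam_def by blast
    moreover have "b \<inter> m \<noteq> {}" using \<open>i \<in> b\<close> mH(2) by blast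
    ultimately show ?thesis using m(2) that by blast
  qed
  have "C \<subseteq> m"
  proof
    fix x assume "x \<in> C"
    show "x \<in> m"
    proof (cases "x = i")
      case True then show ?thesis using mH by simp
    next
      case False
      then have "x \<in> f x" "f x \<in> ?M" using f \<open>x \<in> C\<close> by auto
      then show ?thesis using big by blast
    qed
  qed
  then show ?thesis using mH by blast
qed

lemma two_elems:
  assumes "finite C" "2 \<le> card C"
  obtains i j where "i \<in> C" "j \<in> C" "i \<noteq> j"
proof -
  have "C \<noteq> {}" using assms by auto
  then obtain i where i: "i \<in> C" by blast
  have "C - {i} \<noteq> {}"
  proof
    assume "C - {i} = {}"
    then have "C \<subseteq> {i}" by blast
    then have "card C \<le> 1" using card_mono[of "{i}" C] by simp
    then show False using assms by simp
  qed
  then obtain j where "j \<in> C" "j \<noteq> i" by blast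
  then show ?thesis using that i by blast
qed

lemma comb:
  assumes l1: "lam H1" and l2: "lam H2" and fC: "finite C" and cC: "2 \<le> card C"
    and cov: "\<forall>a\<in>C. \<forall>b\<in>C. a \<noteq> b \<longrightarrow> (\<exists>D\<in>H1 \<union> H2. a \<in> D \<and> b \<in> D)"
  shows "\<exists>D\<in>H1 \<union> H2. C \<subseteq> D"
proof (rule ccontr)
  assume nc: "\<not> (\<exists>D\<in>H1 \<union> H2. C \<subseteq> D)"
  obtain i j0 where ij: "i \<in> C" "j0 \<in> C" "i \<noteq> j0" using two_elems[OF fC cC] by blast
  have "\<exists>j\<in>C. j \<noteq> i \<and> \<not> (\<exists>D\<in>H1. i \<in> D \<and> j \<in> D)"
  proof (rule ccontr)
    assume "\<not> ?thesis"
    then have "\<forall>j\<in>C. j \<noteq> i \<longrightarrow> (\<exists>D\<in>H1. i \<in> D \<and> j \<in> D)" by blast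
    then have "\<exists>D\<in>H1. C \<subseteq> D" using one_family[OF l1 fC ij(1) ij(2)] ij(3) by blast
    then show False using nc by blast
  qed
  then obtain j where j: "j \<in> C" "j \<noteq> i" "\<not> (\<exists>D\<in>H1. i \<in> D \<and> j \<in> D)" by blast
  have "\<exists>k\<in>C. k \<noteq> i \<and> \<not> (\<exists>D\<in>H2. i \<in> D \<and> k \<in> D)"
  proof (rule ccontr)
    assume "\<not> ?thesis"
    then have "\<forall>j\<in>C. j \<noteq> i \<longrightarrow> (\<exists>D\<in>H2. i \<in> D \<and> j \<in> D)" by blast
    then have "\<exists>D\<in>H2. C \<subseteq> D" using one_family[OF l2 fC ij(1) ij(2)] ij(3) by blast
    then show False using nc by blast
  qed
  then obtain k where k: "k \<in> C" "k \<noteq> i" "\<not> (\<exists>D\<in>H2. i \<in> D \<and> k \<in> D)" by blast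
  obtain E2 where E2: "E2 \<in> H2" "i \<in> E2" "j \<in> E2" using cov ij(1) j j(3) by blast
  obtain E1 where E1: "E1 \<in> H1" "i \<in> E1" "k \<in> E1" using cov ij(1) k k(3) by blast
  have "j \<noteq> k" using E1 j(3) by blast
  then obtain D where D: "D \<in> H1 \<union> H2" "j \<in> D" "k \<in> D" using cov j(1) k(1) by blast
  show False
  proof (cases "D \<in> H1")
    case True
    then have "D \<subseteq> E1 \<or> E1 \<subseteq> D \<or> D \<inter> E1 = {}" using E1(1) l1 unfolding lam_def by blast
    then show False using D E1 j(3) True by blast
  next
    case False
    then have "D \<in> H2" using D(1) by blast
    then have "D \<subseteq> E2 \<or> E2 \<subseteq> D \<or> D \<inter> E2 = {}" using E2(1) l2 unfolding lam_def by blast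
    then show False using D E2 k(3) \<open>D \<in> H2\<close> by blast
  qed
qed


lemma pair_in_pairs:
  assumes "a \<in> C" "b \<in> C" "a \<noteq> b" "C \<subseteq> {1..n}"
  shows "{a, b} \<in> pairs n"
  using assms unfolding pairs_def by auto

lemma key:
  fixes Sa Sb A B :: "nat set set" and la lb :: "nat set \<Rightarrow> real"
  assumes fa: "finite Sa" and fb: "finite Sb"
    and lA: "lam A" and lB: "lam B" and SbAB: "Sb \<subseteq> A \<union> B"
    and Sa_prop: "\<forall>C\<in>Sa. C \<subseteq> {1..n} \<and> 2 \<le> card C"
    and nna: "\<forall>C\<in>Sa. la C \<ge> 0" and nnb: "\<forall>C\<in>Sb. lb C \<ge> 0"
    and eq: "\<forall>p\<in>pairs n. (\<Sum>D\<in>Sa. la D * (if p \<subseteq> D then 1 else 0))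
                      = (\<Sum>D\<in>Sb. lb D * (if p \<subseteq> D then 1 else 0))"
    and CU: "C \<in> Sa \<union> Sb"
    and gt: "(if C \<in> Sb then lb C else 0) < (if C \<in> Sa then la C else 0)"
    and mx: "\<forall>D\<in>Sa \<union> Sb. C \<subset> D \<longrightarrow> (if D \<in> Sa then la D else 0) = (if D \<in> Sb then lb D else 0)"
  shows False
proof -
  define La where "La D = (if D \<in> Sa then la D else 0)" for D
  define Lb where "Lb D = (if D \<in> Sb then lb D else 0)" for D
  define U where "U = Sa \<union> Sb"
  define ind where "ind p D = (if p \<subseteq> D then 1 else (0::real))" for p D :: "nat set"
  have fU: "finite U" using fa fb U_def by simp
  have La0: "La D \<ge> 0" for D using nna La_def by auto
  have Lb0: "Lb D \<ge> 0" for D using nnb Lb_def by auto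
  have gt': "Lb C < La C" using gt La_def Lb_def by simp
  have CSa: "C \<in> Sa"
  proof (rule ccontr)
    assume "C \<notin> Sa"
    then have "La C = 0" using La_def by simp
    then show False using gt' Lb0[of C] by simp
  qed
  have Cp: "C \<subseteq> {1..n}" "2 \<le> card C" using Sa_prop CSa by auto
  have fC: "finite C" using Cp(1) finite_subset[of C "{1..n}"] by simp
  have sa: "(\<Sum>D\<in>Sa. la D * ind p D) = (\<Sum>D\<in>U. La D * ind p D)" for p
  proof -
    have "(\<Sum>D\<in>U. La D * ind p D) = (\<Sum>D\<in>U. if D \<in> Sa then la D * ind p D else 0)"
      by (rule sum.cong) (auto simp: La_def)
    also have "\<dots> = (\<Sum>D\<in>{D\<in>U. D \<in> Sa}. la D * ind p D)"
      using sum.inter_filter[OF fU, symmetric] by simp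
    also have "{D\<in>U. D \<in> Sa} = Sa" using U_def by blast
    finally show ?thesis by simp
  qed
  have sb: "(\<Sum>D\<in>Sb. lb D * ind p D) = (\<Sum>D\<in>U. Lb D * ind p D)" for p
  proof -
    have "(\<Sum>D\<in>U. Lb D * ind p D) = (\<Sum>D\<in>U. if D \<in> Sb then lb D * ind p D else 0)"
      by (rule sum.cong) (auto simp: Lb_def)
    also have "\<dots> = (\<Sum>D\<in>{D\<in>U. D \<in> Sb}. lb D * ind p D)"
      using sum.inter_filter[OF fU, symmetric] by simp
    also have "{D\<in>U. D \<in> Sb} = Sb" using U_def by blast
    finally show ?thesis by simp
  qed
  define H1 where "H1 = {D\<in>A. \<not> C \<subseteq> D}"
  define H2 where "H2 = {D\<in>B. \<not> C \<subseteq> D}"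
  have l1: "lam H1" unfolding H1_def by (rule lam_subset[OF lA]) auto
  have l2: "lam H2" unfolding H2_def by (rule lam_subset[OF lB]) auto
  have cov: "\<forall>a\<in>C. \<forall>b\<in>C. a \<noteq> b \<longrightarrow> (\<exists>D\<in>H1 \<union> H2. a \<in> D \<and> b \<in> D)"
  proof (intro ballI impI)
    fix a b assume ab: "a \<in> C" "b \<in> C" "a \<noteq> b"
    define p where "p = {a, b}"
    have pp: "p \<in> pairs n" using pair_in_pairs[OF ab Cp(1)] p_def by simp
    have pC: "p \<subseteq> C" using ab p_def by simp
    have "(\<Sum>D\<in>U. La D * ind p D) = (\<Sum>D\<in>U. Lb D * ind p D)"
    proof -
      have "(\<Sum>D\<in>Sa. la D * ind p D) = (\<Sum>D\<in>Sb. lb D * ind p D)"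
        using bspec[OF eq pp] unfolding ind_def .
      then show ?thesis using sa[of p] sb[of p] by simp
    qed
    then have z: "(\<Sum>D\<in>U. (La D - Lb D) * ind p D) = 0"
      by (simp add: left_diff_distrib sum_subtractf)
    let ?f = "\<lambda>D. (La D - Lb D) * ind p D"
    have split: "(\<Sum>D\<in>U. ?f D) = (\<Sum>D\<in>U \<inter> {D. C \<subseteq> D}. ?f D) + (\<Sum>D\<in>U - {D. C \<subseteq> D}. ?f D)"
      using sum.Int_Diff[OF fU] by blast
    have CinU: "C \<in> U \<inter> {D. C \<subseteq> D}" using CSa U_def by blast
    have fin2: "finite (U \<inter> {D. C \<subseteq> D})" using fU by simp
    have "(\<Sum>D\<in>U \<inter> {D. C \<subseteq> D}. ?f D) = ?f C + (\<Sum>D\<in>(U \<inter> {D. C \<subseteq> D}) - {C}. ?f D)"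
      using sum.remove[OF fin2 CinU] by blast
    also have "(\<Sum>D\<in>(U \<inter> {D. C \<subseteq> D}) - {C}. ?f D) = 0"
    proof (rule sum.neutral, rule ballI)
      fix D assume D: "D \<in> (U \<inter> {D. C \<subseteq> D}) - {C}"
      then have "C \<subset> D" "D \<in> Sa \<union> Sb" using U_def by auto
      then have "La D = Lb D" using mx La_def Lb_def by simp
      then show "?f D = 0" by simp
    qed
    also have "?f C = La C - Lb C" using pC ind_def by simp
    finally have "(\<Sum>D\<in>U \<inter> {D. C \<subseteq> D}. ?f D) = La C - Lb C" by simp
    then have neg: "(\<Sum>D\<in>U - {D. C \<subseteq> D}. ?f D) < 0" using z split gt' by linarith
    have "\<exists>D\<in>U - {D. C \<subseteq> D}. ?f D < 0"
    proof (rule ccontr)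
      assume "\<not> ?thesis"
      then have nn: "\<forall>D\<in>U - {D. C \<subseteq> D}. 0 \<le> ?f D" by (meson not_le)
      have "0 \<le> (\<Sum>D\<in>U - {D. C \<subseteq> D}. ?f D)"
      proof (rule sum_nonneg)
        fix D assume "D \<in> U - {D. C \<subseteq> D}"
        then show "0 \<le> ?f D" using nn by blast
      qed
      then show False using neg by simp
    qed
    then obtain D where D: "D \<in> U" "\<not> C \<subseteq> D" "?f D < 0" by blast
    have pD: "p \<subseteq> D"
    proof (rule ccontr)
      assume "\<not> p \<subseteq> D"
      then have "ind p D = 0" using ind_def by simp
      then show False using D(3) by simp
    qed
    then have "ind p D = 1" using ind_def by simp
    then have "La D < Lb D" using D(3) by simp
    then have "Lb D \<noteq> 0" using La0[of D] by simp
    then have "D \<in> Sb" using Lb_def by (cases "D \<in> Sb") auto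
    then have "D \<in> H1 \<union> H2" using SbAB D(2) H1_def H2_def by blast
    moreover have "a \<in> D" "b \<in> D" using pD p_def by auto
    ultimately show "\<exists>D\<in>H1 \<union> H2. a \<in> D \<and> b \<in> D" by blast
  qed
  obtain D where "D \<in> H1 \<union> H2" "C \<subseteq> D" using comb[OF l1 l2 fC Cp(2) cov] by blast
  then show False unfolding H1_def H2_def by blast
qed


lemma tree_facts:
  assumes "tree_on n T"
  shows "lam (clades T)" "\<forall>C\<in>clades T. C \<subseteq> {1..n} \<and> 2 \<le> card C" "finite (clades T)"
proof -
  have w: "wf_rtree T" "distinct (leaf_list T)" "set (leaf_list T) = {1..n}"
    using assms unfolding tree_on_def by auto
  show "lam (clades T)" using lam_clades w by simp
  show "\<forall>C\<in>clades T. C \<subseteq> {1..n} \<and> 2 \<le> card C"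
  proof
    fix C assume "C \<in> clades T"
    then show "C \<subseteq> {1..n} \<and> 2 \<le> card C"
      using clade_sub[of C T] clade_card[of T C] w by simp
  qed
  show "finite (clades T)" by (rule finite_clades)
qed

lemma TP_facts:
  assumes "S \<in> TP n"
  obtains A B where "S = A \<union> B" "lam A" "lam B" "\<forall>C\<in>S. C \<subseteq> {1..n} \<and> 2 \<le> card C" "finite S"
proof -
  obtain T1 T2 where T: "S = clades T1 \<union> clades T2" "tree_on n T1" "tree_on n T2"
    using assms unfolding TP_def by blast
  have "\<forall>C\<in>S. C \<subseteq> {1..n} \<and> 2 \<le> card C"
    using tree_facts(2)[OF T(2)] tree_facts(2)[OF T(3)] T(1) by blast
  moreover have "finite S" using tree_facts(3)[OF T(2)] tree_facts(3)[OF T(3)] T(1) by simp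
  ultimately show ?thesis using that T(1) tree_facts(1)[OF T(2)] tree_facts(1)[OF T(3)] by blast
qed

lemma uncovered:
  assumes "2 \<le> n" "S = A \<union> B" "lam A" "lam B" "\<forall>C\<in>S. C \<subseteq> {1..n}"
  shows "\<exists>p\<in>pairs n. \<forall>D\<in>S - {{1..n}}. \<not> p \<subseteq> D"
proof -
  define H1 where "H1 = A - {{1..n}}"
  define H2 where "H2 = B - {{1..n}}"
  have l1: "lam H1" unfolding H1_def by (rule lam_subset[OF assms(3)]) auto
  have l2: "lam H2" unfolding H2_def by (rule lam_subset[OF assms(4)]) auto
  have f: "finite {1..n}" by simp
  have c: "2 \<le> card {1..n}" using assms(1) by simp
  have nc: "\<not> (\<exists>D\<in>H1 \<union> H2. {1..n} \<subseteq> D)"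
  proof
    assume "\<exists>D\<in>H1 \<union> H2. {1..n} \<subseteq> D"
    then obtain D where D: "D \<in> H1 \<union> H2" "{1..n} \<subseteq> D" by blast
    then have "D \<in> S" "D \<noteq> {1..n}" using assms(2) unfolding H1_def H2_def by auto
    then have "D \<subseteq> {1..n}" using assms(5) by blast
    then show False using D(2) \<open>D \<noteq> {1..n}\<close> by blast
  qed
  have "\<not> (\<forall>a\<in>{1..n}. \<forall>b\<in>{1..n}. a \<noteq> b \<longrightarrow> (\<exists>D\<in>H1 \<union> H2. a \<in> D \<and> b \<in> D))"
    using comb[OF l1 l2 f c] nc by blast
  then obtain a b where ab: "a \<in> {1..n}" "b \<in> {1..n}" "a \<noteq> b"
    "\<not> (\<exists>D\<in>H1 \<union> H2. a \<in> D \<and> b \<in> D)" by blast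
  have "{a, b} \<in> pairs n" using pair_in_pairs[of a "{1..n}" b n] ab by simp
  moreover have "\<forall>D\<in>S - {{1..n}}. \<not> {a, b} \<subseteq> D"
    using ab(4) assms(2) unfolding H1_def H2_def by blast
  ultimately show ?thesis by blast
qed

lemma Kcone_mono:
  assumes "finite S" "R \<subseteq> S"
  shows "Kcone n R \<subseteq> Kcone n S"
proof
  fix x assume "x \<in> Kcone n R"
  then obtain c l where l: "\<forall>C\<in>R - {{1..n}}. 0 \<le> l C"
    and x: "x = (\<lambda>p. if p \<in> pairs n
               then c - (\<Sum>C \<in> R - {{1..n}}. l C * (if p \<subseteq> C then 1 else 0))
               else 0)"
    unfolding Kcone_def by blast
  define l' where "l' C = (if C \<in> R then l C else 0)" for C
  have fS: "finite (S - {{1..n}})" using assms(1) by simp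
  have eq: "(\<Sum>C \<in> S - {{1..n}}. l' C * (if p \<subseteq> C then 1 else 0))
          = (\<Sum>C \<in> R - {{1..n}}. l C * (if p \<subseteq> C then 1 else 0))" for p :: "nat set"
  proof -
    have "(\<Sum>C \<in> S - {{1..n}}. l' C * (if p \<subseteq> C then 1 else 0))
        = (\<Sum>C \<in> R - {{1..n}}. l' C * (if p \<subseteq> C then 1 else 0))"
      by (rule sum.mono_neutral_right[OF fS]) (use assms(2) in \<open>auto simp: l'_def\<close>)
    also have "\<dots> = (\<Sum>C \<in> R - {{1..n}}. l C * (if p \<subseteq> C then 1 else 0))"
      by (rule sum.cong) (auto simp: l'_def)
    finally show ?thesis .
  qed
  have "\<forall>C\<in>S - {{1..n}}. 0 \<le> l' C" using l unfolding l'_def by auto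
  moreover have "x = (\<lambda>p. if p \<in> pairs n
               then c - (\<Sum>C \<in> S - {{1..n}}. l' C * (if p \<subseteq> C then 1 else 0))
               else 0)"
    unfolding x eq by (rule refl)
  ultimately show "x \<in> Kcone n S" unfolding Kcone_def by blast
qed


theorem proposition3p13:
  fixes n :: nat and S S' :: "nat set set"
  assumes "S \<in> TP n" and "S' \<in> TP n"
  shows "Kcone n S \<inter> Kcone n S' = Kcone n (S \<inter> S')"
proof -
  obtain A B where S: "S = A \<union> B" "lam A" "lam B" "\<forall>C\<in>S. C \<subseteq> {1..n} \<and> 2 \<le> card C" "finite S"
    using TP_facts[OF assms(1)] by blast
  obtain A' B' where S': "S' = A' \<union> B'" "lam A'" "lam B'" "\<forall>C\<in>S'. C \<subseteq> {1..n} \<and> 2 \<le> card C" "finite S'"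
    using TP_facts[OF assms(2)] by blast
  have sub1: "Kcone n (S \<inter> S') \<subseteq> Kcone n S" using Kcone_mono[OF S(5)] by blast
  have sub2: "Kcone n (S \<inter> S') \<subseteq> Kcone n S'" using Kcone_mono[OF S'(5)] by blast
  have sub3: "Kcone n S \<inter> Kcone n S' \<subseteq> Kcone n (S \<inter> S')"
  proof
    fix x assume x: "x \<in> Kcone n S \<inter> Kcone n S'"
    obtain c l where l: "\<forall>C\<in>S - {{1..n}}. 0 \<le> l C"
      and xl: "x = (\<lambda>p. if p \<in> pairs n
               then c - (\<Sum>C \<in> S - {{1..n}}. l C * (if p \<subseteq> C then 1 else 0))
               else 0)"
      using x unfolding Kcone_def by blast
    obtain c' l' where l': "\<forall>C\<in>S' - {{1..n}}. 0 \<le> l' C"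
      and xl': "x = (\<lambda>p. if p \<in> pairs n
               then c' - (\<Sum>C \<in> S' - {{1..n}}. l' C * (if p \<subseteq> C then 1 else 0))
               else 0)"
      using x unfolding Kcone_def by blast
    show "x \<in> Kcone n (S \<inter> S')"
    proof (cases "2 \<le> n")
      case False
      have np: "pairs n = {}"
      proof (rule ccontr)
        assume "pairs n \<noteq> {}"
        then obtain p where "p \<subseteq> {1..n}" "card p = 2" unfolding pairs_def by blast
        then have "card p \<le> card {1..n}" using card_mono[of "{1..n}" p] by simp
        then show False using False \<open>card p = 2\<close> by simp
      qed
      show ?thesis unfolding Kcone_def mem_Collect_eq
        by (rule exI[of _ 0], rule exI[of _ "\<lambda>_. 0"]) (use xl np in simp)
    next
      case True
      define Sa where "Sa = S - {{1..n}}"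
      define Sb where "Sb = S' - {{1..n}}"
      have fa: "finite Sa" using S(5) Sa_def by simp
      have fb: "finite Sb" using S'(5) Sb_def by simp
      obtain p where p: "p \<in> pairs n" "\<forall>D\<in>Sa. \<not> p \<subseteq> D"
        using uncovered[OF True S(1-3)] S(4) Sa_def by blast
      obtain q where q: "q \<in> pairs n" "\<forall>D\<in>Sb. \<not> q \<subseteq> D"
        using uncovered[OF True S'(1-3)] S'(4) Sb_def by blast
      have xp: "x p = c - (\<Sum>C \<in> Sa. l C * (if p \<subseteq> C then 1 else 0))"
        using xl p(1) Sa_def by simp
      also have "(\<Sum>C \<in> Sa. l C * (if p \<subseteq> C then 1 else 0)) = 0"
        using p(2) by (intro sum.neutral) auto
      finally have xp1: "x p = c" by simp
      have "x p = c' - (\<Sum>C \<in> Sb. l' C * (if p \<subseteq> C then 1 else 0))"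
        using xl' p(1) Sb_def by simp
      moreover have "0 \<le> (\<Sum>C \<in> Sb. l' C * (if p \<subseteq> C then 1 else 0))"
        using l' Sb_def by (intro sum_nonneg) auto
      ultimately have "c \<le> c'" using xp1 by simp
      have xq: "x q = c' - (\<Sum>C \<in> Sb. l' C * (if q \<subseteq> C then 1 else 0))"
        using xl' q(1) Sb_def by simp
      also have "(\<Sum>C \<in> Sb. l' C * (if q \<subseteq> C then 1 else 0)) = 0"
        using q(2) by (intro sum.neutral) auto
      finally have xq1: "x q = c'" by simp
      have "x q = c - (\<Sum>C \<in> Sa. l C * (if q \<subseteq> C then 1 else 0))"
        using xl q(1) Sa_def by simp
      moreover have "0 \<le> (\<Sum>C \<in> Sa. l C * (if q \<subseteq> C then 1 else 0))"
        using l Sa_def by (intro sum_nonneg) auto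
      ultimately have "c' \<le> c" using xq1 by simp
      with \<open>c \<le> c'\<close> have cc: "c = c'" by simp
      have eq: "\<forall>p\<in>pairs n. (\<Sum>D\<in>Sa. l D * (if p \<subseteq> D then 1 else 0))
                      = (\<Sum>D\<in>Sb. l' D * (if p \<subseteq> D then 1 else 0))"
      proof
        fix r assume r: "r \<in> pairs n"
        have "x r = c - (\<Sum>C \<in> Sa. l C * (if r \<subseteq> C then 1 else 0))"
          using xl r Sa_def by simp
        moreover have "x r = c' - (\<Sum>C \<in> Sb. l' C * (if r \<subseteq> C then 1 else 0))"
          using xl' r Sb_def by simp
        ultimately show "(\<Sum>D\<in>Sa. l D * (if r \<subseteq> D then 1 else 0))
                      = (\<Sum>D\<in>Sb. l' D * (if r \<subseteq> D then 1 else 0))" using cc by simp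
      qed
      have eq': "\<forall>p\<in>pairs n. (\<Sum>D\<in>Sb. l' D * (if p \<subseteq> D then 1 else 0))
                      = (\<Sum>D\<in>Sa. l D * (if p \<subseteq> D then 1 else 0))"
        using eq by simp
      have SbAB: "Sb \<subseteq> A' \<union> B'" using S'(1) Sb_def by blast
      have SaAB: "Sa \<subseteq> A \<union> B" using S(1) Sa_def by blast
      have Sap: "\<forall>C\<in>Sa. C \<subseteq> {1..n} \<and> 2 \<le> card C" using S(4) Sa_def by blast
      have Sbp: "\<forall>C\<in>Sb. C \<subseteq> {1..n} \<and> 2 \<le> card C" using S'(4) Sb_def by blast
      have na: "\<forall>C\<in>Sa. l C \<ge> 0" using l Sa_def by blast
      have nb: "\<forall>C\<in>Sb. l' C \<ge> 0" using l' Sb_def by blast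
      define La where "La D = (if D \<in> Sa then l D else 0)" for D
      define Lb where "Lb D = (if D \<in> Sb then l' D else 0)" for D
      have allEq: "\<forall>D\<in>Sa \<union> Sb. La D = Lb D"
      proof (rule ccontr)
        assume ne: "\<not> ?thesis"
        define Dset where "Dset = {D\<in>Sa \<union> Sb. La D \<noteq> Lb D}"
        have "finite Dset" using fa fb Dset_def by simp
        moreover have "Dset \<noteq> {}" using ne Dset_def by blast
        ultimately obtain C where C: "C \<in> Dset" "\<forall>b\<in>Dset. C \<subseteq> b \<longrightarrow> C = b"
          using finite_has_maximal[of Dset] by blast
        have CU: "C \<in> Sa \<union> Sb" and CN: "La C \<noteq> Lb C" using C(1) Dset_def by auto
        have mx: "\<forall>D\<in>Sa \<union> Sb. C \<subset> D \<longrightarrow> La D = Lb D"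
        proof (intro ballI impI)
          fix D assume D: "D \<in> Sa \<union> Sb" "C \<subset> D"
          show "La D = Lb D"
          proof (rule ccontr)
            assume "La D \<noteq> Lb D"
            then have "D \<in> Dset" using D(1) Dset_def by simp
            then have "C = D" using C(2) D(2) by blast
            then show False using D(2) by simp
          qed
        qed
        show False
        proof (cases "Lb C < La C")
          case True
          show False
          proof (rule key[OF fa fb S'(2) S'(3) SbAB Sap na nb eq CU])
            show "(if C \<in> Sb then l' C else 0) < (if C \<in> Sa then l C else 0)"
              using True unfolding La_def Lb_def .
            show "\<forall>D\<in>Sa \<union> Sb. C \<subset> D \<longrightarrow> (if D \<in> Sa then l D else 0) = (if D \<in> Sb then l' D else 0)"
            proof (intro ballI impI)
              fix D assume "D \<in> Sa \<union> Sb" "C \<subset> D"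
              then have "La D = Lb D" using mx by blast
              then show "(if D \<in> Sa then l D else 0) = (if D \<in> Sb then l' D else 0)"
                unfolding La_def Lb_def .
            qed
          qed
        next
          case False
          then have lt: "La C < Lb C" using CN by simp
          have CU': "C \<in> Sb \<union> Sa" using CU by blast
          show False
          proof (rule key[OF fb fa S(2) S(3) SaAB Sbp nb na eq' CU'])
            show "(if C \<in> Sa then l C else 0) < (if C \<in> Sb then l' C else 0)"
              using lt unfolding La_def Lb_def .
            show "\<forall>D\<in>Sb \<union> Sa. C \<subset> D \<longrightarrow> (if D \<in> Sb then l' D else 0) = (if D \<in> Sa then l D else 0)"
            proof (intro ballI impI)
              fix D assume "D \<in> Sb \<union> Sa" "C \<subset> D"
              then have "La D = Lb D" using mx by blast
              then show "(if D \<in> Sb then l' D else 0) = (if D \<in> Sa then l D else 0)"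
                unfolding La_def Lb_def by (rule sym)
            qed
          qed
        qed
      qed
      have zero: "\<forall>C\<in>Sa - Sa \<inter> Sb. l C * (if r \<subseteq> C then 1 else 0) = 0" for r :: "nat set"
      proof
        fix C assume C: "C \<in> Sa - Sa \<inter> Sb"
        then have "La C = Lb C" using allEq by blast
        then have "l C = 0" using C La_def Lb_def by simp
        then show "l C * (if r \<subseteq> C then 1 else 0) = 0" by simp
      qed
      have sumeq: "(\<Sum>C \<in> Sa. l C * (if r \<subseteq> C then 1 else 0))
                 = (\<Sum>C \<in> Sa \<inter> Sb. l C * (if r \<subseteq> C then 1 else 0))" for r :: "nat set"
        by (rule sum.mono_neutral_right[OF fa]) (use zero in auto)
      have int: "(S \<inter> S') - {{1..n}} = Sa \<inter> Sb" using Sa_def Sb_def by blast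
      have "x = (\<lambda>p. if p \<in> pairs n
               then c - (\<Sum>C \<in> (S \<inter> S') - {{1..n}}. l C * (if p \<subseteq> C then 1 else 0))
               else 0)"
      proof (rule ext)
        fix r
        have "(\<Sum>C \<in> S - {{1..n}}. l C * (if r \<subseteq> C then 1 else 0))
            = (\<Sum>C \<in> (S \<inter> S') - {{1..n}}. l C * (if r \<subseteq> C then 1 else 0))"
          using sumeq[of r] unfolding int Sa_def .
        then show "x r = (if r \<in> pairs n
               then c - (\<Sum>C \<in> (S \<inter> S') - {{1..n}}. l C * (if r \<subseteq> C then 1 else 0))
               else 0)" unfolding xl by simp
      qed
      moreover have "\<forall>C\<in>(S \<inter> S') - {{1..n}}. 0 \<le> l C" using l by blast
      ultimately show ?thesis unfolding Kcone_def mem_Collect_eq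
        by (intro exI[of _ c] exI[of _ l]) simp
    qed
  qed
  show ?thesis using sub1 sub2 sub3 by blast
qed

end
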